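(* Let $n\ge3$ and let $M_j=(\mathbb{T}^n,g_j)$ with $g_j=e^{2f_j}g_{0,j}$, $f_j$ smooth, $g_{0,j}$ a flat metric on $\mathbb{T}^n$, $M_{0,j}=(\mathbb{T}^n,g_{0,j})$, and suppose $R_{g_j}\ge-\frac1j$ and $\operatorname{Vol}(M_j)\le V_0$. Then for every real $\alpha\ne0$, $$\frac{2}{\alpha}\Delta^{g_{0,j}}e^{\alpha f_j}+(n-2-2\alpha)|\nabla^{g_{0,j}}f_j|^2e^{\alpha f_j}\le\frac{e^{(2+\alpha)f_j}}{(n-1)j},$$ and moreover $$\int_{\mathbb{T}^n}|\nabla^{g_{0,j}}f_j|^2dV_{g_{0,j}}\le\frac{V_0^{2/n}\operatorname{Vol}(M_{0,j})^{\frac{n-2}{n}}}{(n-1)j},\qquad \int_{\mathbb{T}^n}|\nabla^{g_{0,j}}e^{-f_j}|^2dV_{g_{0,j}}\le\frac{\operatorname{Vol}(M_{0,j})}{j(n-1)(n+2)},$$ and for every $\alpha\in(0,\frac{n-2}{2})$, $$\int_{\mathbb{T}^n}|\nabla^{g_{0,j}}e^{\frac{\alpha}{2}f_j}|^2dV_{g_{0,j}}\le\frac{\alpha^2V_0^{\frac{2+\alpha}{n}}\operatorname{Vol}(M_{0,j})^{\frac{n-2-\alpha}{n}}}{4(n-2-2\alpha)(n-1)j}.$$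
   Context: $\Delta^{g}$ is the (nonpositive, analyst's) Laplace–Beltrami operator of $g$ (so $\Delta = \sum\partial_i^2$ in Euclidean coordinates), $\nabla^g$ the gradient, $R_g$ scalar curvature, $dV_g$ volume measure. For $g=e^{2f}g_0$ one has $R_g=e^{-2f}\big(R_{g_0}-2(n-1)\Delta^{g_0}f-(n-2)(n-1)|\nabla^{g_0}f|^2\big)$. *)

theory Defs
  imports "HOL-Analysis.Analysis"
begin

text \<open>A flat torus (T^n, g0) is modelled (up to isometry) as R^n / B Z^n with the Euclidean
metric, where the columns of the invertible matrix B span the lattice. Functions on the torus
are B Z^n - periodic functions on R^n.\<close>

definition pd :: "'n::finite \<Rightarrow> (real^'n \<Rightarrow> real) \<Rightarrow> real^'n \<Rightarrow> real" where
  "pd i f x = frechet_derivative f (at x) (axis i 1)"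

fun Ck :: "nat \<Rightarrow> (real^'n::finite \<Rightarrow> real) \<Rightarrow> bool" where
  "Ck 0 f = continuous_on UNIV f"
| "Ck (Suc k) f = (f differentiable_on UNIV \<and> (\<forall>i. Ck k (pd i f)))"

definition smooth :: "(real^'n::finite \<Rightarrow> real) \<Rightarrow> bool" where
  "smooth f = (\<forall>k. Ck k f)"

definition grad_sq :: "(real^'n::finite \<Rightarrow> real) \<Rightarrow> real^'n \<Rightarrow> real" where
  "grad_sq f x = (\<Sum>i\<in>UNIV. (pd i f x)\<^sup>2)"

definition lap :: "(real^'n::finite \<Rightarrow> real) \<Rightarrow> real^'n \<Rightarrow> real" where
  "lap f x = (\<Sum>i\<in>UNIV. pd i (pd i f) x)"

definition lattice_periodic :: "real^'n^'n \<Rightarrow> (real^'n::finite \<Rightarrow> real) \<Rightarrow> bool" where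
  "lattice_periodic B f = (\<forall>x i. f (x + column i B) = f x)"

definition fund_dom :: "real^'n^'n \<Rightarrow> (real^'n::finite) set" where
  "fund_dom B = {B *v t | t. \<forall>i. 0 \<le> t $ i \<and> t $ i \<le> 1}"

text \<open>Scalar curvature of g = e^{2f} g0 with g0 flat (R_{g0} = 0), by the conformal formula.\<close>
definition scal_conf :: "(real^'n::finite \<Rightarrow> real) \<Rightarrow> real^'n \<Rightarrow> real" where
  "scal_conf f x = exp (-2 * f x) * (0 - 2 * (real CARD('n) - 1) * lap f x
      - (real CARD('n) - 2) * (real CARD('n) - 1) * grad_sq f x)"

end

theory Submission
  imports Defs
begin

lemma smooth_diff: "smooth f \<Longrightarrow> f differentiable (at x)"
proof -
  assume "smooth f"
  then have "Ck (Suc 0) f" unfolding smooth_def by blast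
  then show ?thesis by (auto simp: differentiable_on_def)
qed

lemma smooth_pd: "smooth f \<Longrightarrow> smooth (pd i f)"
  unfolding smooth_def by (metis Ck.simps(2))

lemma smooth_cont: "smooth f \<Longrightarrow> continuous_on UNIV f"
  unfolding smooth_def by (metis Ck.simps(1))

lemma pd_deriv: "(f has_derivative f') (at x) \<Longrightarrow> pd i f x = f' (axis i 1)"
  unfolding pd_def by (metis frechet_derivative_at)

lemma pd_exp:
  assumes "f differentiable (at x)"
  shows "pd i (\<lambda>y. exp (c * f y)) x = c * exp (c * f x) * pd i f x"
proof -
  have d: "(f has_derivative frechet_derivative f (at x)) (at x)"
    using assms frechet_derivative_works by blast
  have "((\<lambda>y. exp (c * f y)) has_derivative (\<lambda>h. exp (c * f x) * (c * frechet_derivative f (at x) h))) (at x)"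
    by (auto intro!: derivative_eq_intros d)
  from pd_deriv[OF this, of i] show ?thesis by (simp add: pd_def)
qed

lemma pd_mult:
  assumes "g differentiable (at x)" "k differentiable (at x)"
  shows "pd i (\<lambda>y. g y * k y) x = pd i g x * k x + g x * pd i k x"
proof -
  have d1: "(g has_derivative frechet_derivative g (at x)) (at x)"
    using assms frechet_derivative_works by blast
  have d2: "(k has_derivative frechet_derivative k (at x)) (at x)"
    using assms frechet_derivative_works by blast
  have "((\<lambda>y. g y * k y) has_derivative (\<lambda>h. g x * frechet_derivative k (at x) h + frechet_derivative g (at x) h * k x)) (at x)"
    by (rule has_derivative_mult[OF d1 d2])
  from pd_deriv[OF this, of i] show ?thesis by (simp add: pd_def)
qed



lemma cont_integrable:
  fixes f :: "'a::euclidean_space \<Rightarrow> real"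
  assumes "compact S" "continuous_on S f"
  shows "f integrable_on S"
proof -
  have "integrable lborel (\<lambda>x. indicator S x *\<^sub>R f x)"
    using borel_integrable_compact[OF assms] .
  from has_integral_integral_lborel[OF this]
  have "((\<lambda>x. indicator S x *\<^sub>R f x) has_integral integral\<^sup>L lborel (\<lambda>x. indicator S x *\<^sub>R f x)) UNIV" .
  moreover have "(\<lambda>x. indicator S x *\<^sub>R f x) = (\<lambda>x. if x \<in> S then f x else 0)"
    by (auto simp: indicator_def)
  ultimately have "((\<lambda>x. if x \<in> S then f x else 0) has_integral integral\<^sup>L lborel (\<lambda>x. indicator S x *\<^sub>R f x)) UNIV" by simp
  then show ?thesis
    using has_integral_restrict_UNIV integrable_on_def by blast
qed

lemma has_integral_translate:
  fixes f :: "'a::euclidean_space \<Rightarrow> real"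
  assumes "bounded S" "(f has_integral i) S"
  shows "((\<lambda>x. f (x + c)) has_integral i) ((\<lambda>x. x - c) ` S)"
proof -
  obtain a where a: "S \<subseteq> cbox (-a) a" using bounded_subset_cbox_symmetric[OF assms(1)] by blast
  have "((\<lambda>x. if x \<in> S then f x else 0) has_integral i) (cbox (-a) a)"
    using has_integral_restrict[OF a] assms(2) by blast
  from has_integral_shift_cbox[OF this, of c]
  have 1: "((\<lambda>x. if x + c \<in> S then f (x + c) else 0) has_integral i) (cbox (-a - c) (a - c))" .
  have eq: "(\<lambda>x. if x + c \<in> S then f (x + c) else 0) = (\<lambda>x. if x \<in> (\<lambda>x. x - c) ` S then f (x + c) else 0)"
    by (force simp: image_iff)
  have sub: "(\<lambda>x. x - c) ` S \<subseteq> cbox (-a - c) (a - c)"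
    using a by (auto simp: mem_box inner_diff_left)
  show ?thesis using 1 unfolding eq using has_integral_restrict[OF sub] by blast
qed

lemma deriv_lin:
  fixes h :: "real^'n::finite \<Rightarrow> real"
  assumes "h differentiable (at x)"
  shows "frechet_derivative h (at x) v = (\<Sum>i\<in>UNIV. v$i * pd i h x)"
proof -
  have lin: "linear (frechet_derivative h (at x))" using linear_frechet_derivative[OF assms] .
  have "frechet_derivative h (at x) v = frechet_derivative h (at x) (\<Sum>i\<in>UNIV. v$i *\<^sub>R axis i 1)"
    using basis_expansion[of v] by (simp add: scalar_mult_eq_scaleR)
  also have "\<dots> = (\<Sum>i\<in>UNIV. v$i * pd i h x)"
    by (simp add: linear_sum[OF lin] linear_cmul[OF lin] pd_def)
  finally show ?thesis .
qed

lemma fund_dom_img: "fund_dom B = (\<lambda>t. B *v t) ` cbox 0 1"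
  unfolding fund_dom_def by (auto simp: mem_box_cart)

lemma compact_fund_dom: "compact (fund_dom B)"
  unfolding fund_dom_img
  by (intro compact_continuous_image linear_continuous_on matrix_vector_mul_bounded_linear compact_cbox)



lemma trans_inv:
  fixes B :: "real^'n::finite^'n" and h :: "real^'n \<Rightarrow> real"
  assumes B: "invertible B" and per: "lattice_periodic B h" and hc: "continuous_on UNIV h"
    and s: "0 < s" "s < 1"
  shows "integral (fund_dom B) (\<lambda>x. h (x + s *\<^sub>R column k B)) = integral (fund_dom B) h"
proof -
  obtain Bi where Bi: "Bi ** B = mat 1" using B invertible_left_inverse by blast
  define L where "L = (\<lambda>t::real^'n. B *v t)"
  define b where "b = column k B"
  define e where "e = (axis k 1 :: real^'n)"
  have Le: "L e = b" unfolding L_def e_def b_def by (simp add: matrix_vector_mult_basis)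
  have Ladd: "L (t + u) = L t + L u" for t u unfolding L_def by (simp add: matrix_vector_right_distrib)
  have Lsc: "L (c *\<^sub>R t) = c *\<^sub>R L t" for c t unfolding L_def
    by (metis linear_cmul matrix_vector_mul_linear)
  have Linv: "Bi *v L t = t" for t unfolding L_def using Bi by (simp add: matrix_vector_mul_assoc)
  have Linj: "L t1 = L t2 \<Longrightarrow> t1 = t2" for t1 t2 using Linv by metis
  have Lcont: "continuous_on UNIV L" unfolding L_def
    by (intro linear_continuous_on matrix_vector_mul_bounded_linear)
  define C where "C = (cbox 0 1 :: (real^'n) set)"
  define A0 where "A0 = C \<inter> {t. s \<le> t$k}"
  define D0 where "D0 = C \<inter> {t. t$k \<le> s}"
  define D1 where "D1 = (\<lambda>t. t + e) ` D0"
  have ecomp: "e $ i = (if i = k then 1 else 0)" for i unfolding e_def by (simp add: axis_def)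
  have memC: "t \<in> C \<longleftrightarrow> (\<forall>i. 0 \<le> t$i \<and> t$i \<le> 1)" for t unfolding C_def by (simp add: mem_box_cart)
  have cl1: "closed {t::real^'n. s \<le> t$k}" by (intro closed_Collect_le continuous_intros)
  have cl2: "closed {t::real^'n. t$k \<le> s}" by (intro closed_Collect_le continuous_intros)
  have cA0: "compact A0" unfolding A0_def C_def using cl1 by (intro compact_Int_closed compact_cbox)
  have cD0: "compact D0" unfolding D0_def C_def using cl2 by (intro compact_Int_closed compact_cbox)
  have cD1: "compact D1" unfolding D1_def using cD0 by (intro compact_continuous_image continuous_intros)
  have cLA: "compact (L ` A0)" by (intro compact_continuous_image continuous_on_subset[OF Lcont] cA0) auto
  have cLD0: "compact (L ` D0)" by (intro compact_continuous_image continuous_on_subset[OF Lcont] cD0) auto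
  have cLD1: "compact (L ` D1)" by (intro compact_continuous_image continuous_on_subset[OF Lcont] cD1) auto
  have P: "fund_dom B = L ` A0 \<union> L ` D0"
  proof -
    have "C = A0 \<union> D0" unfolding A0_def D0_def by auto
    then show ?thesis unfolding fund_dom_img L_def[symmetric] C_def[symmetric] by auto
  qed
  have CT: "(\<lambda>t. t + s *\<^sub>R e) ` C = A0 \<union> D1"
  proof
    show "(\<lambda>t. t + s *\<^sub>R e) ` C \<subseteq> A0 \<union> D1"
    proof
      fix u assume "u \<in> (\<lambda>t. t + s *\<^sub>R e) ` C"
      then obtain t where t: "t \<in> C" "u = t + s *\<^sub>R e" by auto
      show "u \<in> A0 \<union> D1"
      proof (cases "t$k + s \<le> 1")
        case True
        then have "u \<in> A0" using t s unfolding A0_def by (auto simp: memC ecomp)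
        then show ?thesis by auto
      next
        case False
        have "t$k \<le> 1" using t(1) memC by blast
        have "\<forall>i. 0 \<le> (u - e)$i \<and> (u - e)$i \<le> 1"
        proof
          fix i
          have "0 \<le> t$i \<and> t$i \<le> 1" using t(1) memC by blast
          then show "0 \<le> (u - e)$i \<and> (u - e)$i \<le> 1"
            using t s False \<open>t$k \<le> 1\<close> by (cases "i = k") (auto simp: ecomp)
        qed
        then have "u - e \<in> D0" using t s False \<open>t$k \<le> 1\<close> unfolding D0_def by (auto simp: memC ecomp)
        then have "(u - e) + e \<in> D1" unfolding D1_def by blast
        then show ?thesis by simp
      qed
    qed
  next
    show "A0 \<union> D1 \<subseteq> (\<lambda>t. t + s *\<^sub>R e) ` C"
    proof
      fix u assume "u \<in> A0 \<union> D1"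
      then consider "u \<in> A0" | v where "v \<in> D0" "u = v + e" unfolding D1_def by auto
      then show "u \<in> (\<lambda>t. t + s *\<^sub>R e) ` C"
      proof cases
        case 1
        then have u: "u \<in> C" "s \<le> u$k" unfolding A0_def by auto
        have "\<forall>i. 0 \<le> (u - s *\<^sub>R e)$i \<and> (u - s *\<^sub>R e)$i \<le> 1"
        proof
          fix i
          have "0 \<le> u$i \<and> u$i \<le> 1" "0 \<le> u$k \<and> u$k \<le> 1" using u(1) memC by blast+
          then show "0 \<le> (u - s *\<^sub>R e)$i \<and> (u - s *\<^sub>R e)$i \<le> 1"
            using u s by (cases "i = k") (auto simp: ecomp)
        qed
        then have "u - s *\<^sub>R e \<in> C" using memC by blast
        then show ?thesis by (metis (no_types, lifting) diff_add_cancel image_eqI)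
      next
        case 2
        then have v: "v \<in> C" "v$k \<le> s" unfolding D0_def by auto
        have "\<forall>i. 0 \<le> (v + (1 - s) *\<^sub>R e)$i \<and> (v + (1 - s) *\<^sub>R e)$i \<le> 1"
        proof
          fix i
          have "0 \<le> v$i \<and> v$i \<le> 1" "0 \<le> v$k \<and> v$k \<le> 1" using v(1) memC by blast+
          then show "0 \<le> (v + (1 - s) *\<^sub>R e)$i \<and> (v + (1 - s) *\<^sub>R e)$i \<le> 1"
            using v s by (cases "i = k") (auto simp: ecomp)
        qed
        then have "v + (1 - s) *\<^sub>R e \<in> C" using memC by blast
        moreover have "u = v + (1 - s) *\<^sub>R e + s *\<^sub>R e" using 2 by (simp add: algebra_simps)
        ultimately show ?thesis by blast
      qed
    qed
  qed
  have PT: "(\<lambda>x. x + s *\<^sub>R b) ` fund_dom B = L ` A0 \<union> L ` D1"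
  proof -
    have "(\<lambda>x. x + s *\<^sub>R b) ` fund_dom B = L ` ((\<lambda>t. t + s *\<^sub>R e) ` C)"
      unfolding fund_dom_img L_def[symmetric] C_def[symmetric] image_image
      by (simp add: Ladd Lsc Le)
    then show ?thesis unfolding CT by auto
  qed
  define Bik where "Bik = (\<chi> j. Bi $ k $ j)"
  have Bik: "Bik \<bullet> L t = t $ k" for t
  proof -
    have "Bik \<bullet> L t = (Bi *v L t) $ k"
      unfolding Bik_def by (simp add: inner_vec_def matrix_vector_mult_def mult.commute)
    then show ?thesis by (simp add: Linv)
  qed
  have neg1: "negligible (L ` A0 \<inter> L ` D0)"
  proof (rule negligible_subset[OF negligible_hyperplane[of Bik s]])
    show "Bik \<noteq> 0 \<or> s \<noteq> 0" using s by auto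
    show "L ` A0 \<inter> L ` D0 \<subseteq> {x. Bik \<bullet> x = s}"
    proof
      fix x assume "x \<in> L ` A0 \<inter> L ` D0"
      then obtain t1 t2 where "t1 \<in> A0" "t2 \<in> D0" "x = L t1" "x = L t2" by auto
      then have "t1 = t2" "s \<le> t1$k" "t2$k \<le> s" using Linj unfolding A0_def D0_def by auto
      then show "x \<in> {x. Bik \<bullet> x = s}" using \<open>x = L t1\<close> by (simp add: Bik)
    qed
  qed
  have neg2: "negligible (L ` A0 \<inter> L ` D1)"
  proof (rule negligible_subset[OF negligible_hyperplane[of Bik 1]])
    show "Bik \<noteq> 0 \<or> (1::real) \<noteq> 0" by auto
    show "L ` A0 \<inter> L ` D1 \<subseteq> {x. Bik \<bullet> x = 1}"
    proof
      fix x assume "x \<in> L ` A0 \<inter> L ` D1"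
      then obtain t1 v where "t1 \<in> A0" "v \<in> D0" "x = L t1" "x = L (v + e)"
        unfolding D1_def by auto
      then have "t1 = v + e" "t1 $ k \<le> 1" "v $ k \<ge> 0" using Linj unfolding A0_def D0_def by (auto simp: memC)
      then have "t1 $ k = 1" by (simp add: ecomp)
      then show "x \<in> {x. Bik \<bullet> x = 1}" using \<open>x = L t1\<close> by (simp add: Bik)
    qed
  qed
  have int: "compact S \<Longrightarrow> (h has_integral integral S h) S" for S
    by (intro integrable_integral cont_integrable continuous_on_subset[OF hc]) auto
  have iA: "(h has_integral integral (L ` A0) h) (L ` A0)" using int cLA .
  have iD1: "(h has_integral integral (L ` D1) h) (L ` D1)" using int cLD1 .
  have LD1: "L ` D1 = (\<lambda>x. x + b) ` L ` D0" unfolding D1_def image_image by (simp add: Ladd Le)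
  have "((\<lambda>x. h (x + b)) has_integral integral (L ` D1) h) ((\<lambda>x. x - b) ` L ` D1)"
    by (rule has_integral_translate[OF compact_imp_bounded[OF cLD1] iD1])
  moreover have "(\<lambda>x. x - b) ` L ` D1 = L ` D0" unfolding LD1 image_image by simp
  moreover have "(\<lambda>x. h (x + b)) = h" using per unfolding lattice_periodic_def b_def by auto
  ultimately have iD0: "(h has_integral integral (L ` D1) h) (L ` D0)" by simp
  have "(h has_integral integral (L ` A0) h + integral (L ` D1) h) (fund_dom B)"
    unfolding P by (rule has_integral_Un[OF iA iD0 neg1])
  then have r1: "integral (fund_dom B) h = integral (L ` A0) h + integral (L ` D1) h"
    by (rule integral_unique)
  have "(h has_integral integral (L ` A0) h + integral (L ` D1) h) ((\<lambda>x. x + s *\<^sub>R b) ` fund_dom B)"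
    unfolding PT by (rule has_integral_Un[OF iA iD1 neg2])
  moreover have "bounded ((\<lambda>x. x + s *\<^sub>R b) ` fund_dom B)" unfolding PT
    using cLA cLD1 by (simp add: compact_imp_bounded)
  ultimately have "((\<lambda>x. h (x + s *\<^sub>R b)) has_integral integral (L ` A0) h + integral (L ` D1) h) ((\<lambda>x. x - s *\<^sub>R b) ` ((\<lambda>x. x + s *\<^sub>R b) ` fund_dom B))"
    using has_integral_translate by blast
  then have "((\<lambda>x. h (x + s *\<^sub>R b)) has_integral integral (L ` A0) h + integral (L ` D1) h) (fund_dom B)"
    unfolding image_image by simp
  then show ?thesis using r1 b_def integral_unique by metis
qed



lemma int_dir_zero:
  fixes B :: "real^'n::finite^'n" and h :: "real^'n \<Rightarrow> real"
  assumes B: "invertible B" and per: "lattice_periodic B h"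
    and hd: "\<And>x. h differentiable (at x)" and hc: "\<And>i. continuous_on UNIV (pd i h)"
  shows "integral (fund_dom B) (\<lambda>x. frechet_derivative h (at x) (column k B)) = 0"
proof -
  define P where "P = fund_dom B"
  define b where "b = column k B"
  define g where "g = (\<lambda>x. frechet_derivative h (at x) b)"
  have cP: "compact P" unfolding P_def by (rule compact_fund_dom)
  have geq: "g x = (\<Sum>i\<in>UNIV. b$i * pd i h x)" for x unfolding g_def using deriv_lin[OF hd] .
  have gc: "continuous_on UNIV g"
    unfolding geq[abs_def] by (intro continuous_intros hc)
  have hcont: "continuous_on UNIV h"
    using hd differentiable_imp_continuous_within continuous_at_imp_continuous_on by blast
  have hder: "((\<lambda>t. h (x + t *\<^sub>R b)) has_real_derivative g (x + t *\<^sub>R b)) (at t)" for x t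
  proof -
    have d: "(h has_derivative frechet_derivative h (at (x + t *\<^sub>R b))) (at (x + t *\<^sub>R b))"
      using hd frechet_derivative_works by blast
    have lin: "linear (frechet_derivative h (at (x + t *\<^sub>R b)))" using linear_frechet_derivative[OF hd] .
    have "((\<lambda>t. x + t *\<^sub>R b) has_derivative (\<lambda>u. u *\<^sub>R b)) (at t)"
      by (auto intro!: derivative_eq_intros)
    from has_derivative_compose[OF this d]
    have "((\<lambda>t. h (x + t *\<^sub>R b)) has_derivative (\<lambda>u. frechet_derivative h (at (x + t *\<^sub>R b)) (u *\<^sub>R b))) (at t)"
      by (simp add: o_def)
    moreover have "(\<lambda>u. frechet_derivative h (at (x + t *\<^sub>R b)) (u *\<^sub>R b)) = (*) (g (x + t *\<^sub>R b))"
      by (auto simp: linear_cmul[OF lin] g_def)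
    ultimately show ?thesis unfolding has_field_derivative_def by simp
  qed
  have cK: "compact (P \<times> {0..1::real})" using cP by (intro compact_Times) auto
  have "continuous_on (P \<times> {0..1}) (\<lambda>z. fst z + snd z *\<^sub>R b)" by (intro continuous_intros)
  then have "continuous_on (P \<times> {0..1}) (\<lambda>z. g (fst z + snd z *\<^sub>R b))"
    by (rule continuous_on_compose2[OF gc]) auto
  then have "compact ((\<lambda>z. g (fst z + snd z *\<^sub>R b)) ` (P \<times> {0..1}))"
    by (rule compact_continuous_image[OF _ cK])
  then obtain M where M0: "\<forall>y\<in>(\<lambda>z. g (fst z + snd z *\<^sub>R b)) ` (P \<times> {0..1}). norm y \<le> M"
    using compact_imp_bounded bounded_iff by blast
  have M: "norm (g (fst z + snd z *\<^sub>R b)) \<le> M" if "z \<in> P \<times> {0..1}" for z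
    using M0 that by blast
  define s where "s = (\<lambda>m::nat. 1 / (real m + 2))"
  have s0: "0 < s m" "s m < 1" for m unfolding s_def by auto
  have slim: "s \<longlonglongrightarrow> 0"
  proof -
    have "s = (\<lambda>m. inverse (real (Suc (Suc m))))" unfolding s_def by (auto simp: field_simps)
    then show ?thesis using LIMSEQ_Suc[OF LIMSEQ_inverse_real_of_nat] by simp
  qed
  define Q where "Q = (\<lambda>m x. (h (x + s m *\<^sub>R b) - h x) / s m)"
  have Qc: "continuous_on UNIV (Q m)" for m
  proof -
    have "s m \<noteq> 0" using s0(1)[of m] by simp
    have "continuous_on UNIV (\<lambda>x. h (x + s m *\<^sub>R b))"
      by (rule continuous_on_compose2[OF hcont]) (auto intro: continuous_intros)
    then show ?thesis unfolding Q_def using \<open>s m \<noteq> 0\<close> by (intro continuous_intros hcont) auto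
  qed
  have hint: "h integrable_on P" using cont_integrable[OF cP] hcont continuous_on_subset by blast
  have hsint: "(\<lambda>x. h (x + s m *\<^sub>R b)) integrable_on P" for m
  proof -
    have "continuous_on UNIV (\<lambda>x. h (x + s m *\<^sub>R b))"
      by (rule continuous_on_compose2[OF hcont]) (auto intro: continuous_intros)
    then show ?thesis using cont_integrable[OF cP] continuous_on_subset by blast
  qed
  have IQ: "integral P (Q m) = 0" for m
  proof -
    have "integral P (Q m) = integral P (\<lambda>x. (h (x + s m *\<^sub>R b) - h x)) / s m"
      unfolding Q_def by (rule integral_divide)
    also have "\<dots> = (integral P (\<lambda>x. h (x + s m *\<^sub>R b)) - integral P h) / s m"
      using integral_diff[OF hsint hint] by simp
    also have "\<dots> = 0" unfolding P_def b_def using trans_inv[OF B per hcont s0] by simp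
    finally show ?thesis .
  qed
  have conv: "(\<lambda>m. Q m x) \<longlonglongrightarrow> g x" for x
  proof -
    have "((\<lambda>t. (h (x + (0 + t) *\<^sub>R b) - h (x + 0 *\<^sub>R b)) / t) \<midarrow>0\<rightarrow> g (x + 0 *\<^sub>R b))"
      using hder[of x 0] unfolding DERIV_def .
    then have "((\<lambda>t. (h (x + t *\<^sub>R b) - h x) / t) \<midarrow>0\<rightarrow> g x)" by simp
    moreover have "\<forall>m. s m \<noteq> 0" using s0 by (metis less_irrefl)
    ultimately have "(\<lambda>m. (h (x + s m *\<^sub>R b) - h x) / s m) \<longlonglongrightarrow> g x"
      using LIMSEQ_SEQ_conv[THEN iffD2, OF \<open>((\<lambda>t. (h (x + t *\<^sub>R b) - h x) / t) \<midarrow>0\<rightarrow> g x)\<close>] slim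
      by (metis (mono_tags, lifting))
    then show ?thesis unfolding Q_def .
  qed
  have bound: "norm (Q m x) \<le> M" if x: "x \<in> P" for m x
  proof -
    have "\<exists>z>0. z < s m \<and> h (x + s m *\<^sub>R b) - h (x + 0 *\<^sub>R b) = (s m - 0) * g (x + z *\<^sub>R b)"
      by (rule MVT2[OF s0(1)[of m], of "\<lambda>t. h (x + t *\<^sub>R b)" "\<lambda>t. g (x + t *\<^sub>R b)"]) (rule hder)
    then obtain z where z: "0 < z" "z < s m"
      "h (x + s m *\<^sub>R b) - h (x + 0 *\<^sub>R b) = (s m - 0) * g (x + z *\<^sub>R b)" by blast
    have "Q m x = g (x + z *\<^sub>R b)" unfolding Q_def using z s0[of m] by simp
    moreover have "(x, z) \<in> P \<times> {0..1}" using x z s0[of m] by auto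
    ultimately show ?thesis using M[of "(x, z)"] by simp
  qed
  have Mint: "(\<lambda>x. M) integrable_on P" using cont_integrable[OF cP] by simp
  have "(\<lambda>m. integral P (Q m)) \<longlonglongrightarrow> integral P g"
  proof (rule dominated_convergence(2)[of Q P "\<lambda>x. M" g])
    show "Q m integrable_on P" for m using cont_integrable[OF cP continuous_on_subset[OF Qc]] by blast
  qed (use Mint bound conv in auto)
  then have "(\<lambda>m. 0) \<longlonglongrightarrow> integral P g" using IQ by simp
  then show ?thesis unfolding P_def g_def b_def by (simp add: LIMSEQ_const_iff)
qed



lemma int_pd_zero:
  fixes B :: "real^'n::finite^'n" and h :: "real^'n \<Rightarrow> real"
  assumes B: "invertible B" and per: "lattice_periodic B h"
    and hd: "\<And>x. h differentiable (at x)" and hc: "\<And>i. continuous_on UNIV (pd i h)"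
  shows "integral (fund_dom B) (pd i h) = 0"
proof -
  obtain Bi where Bi: "B ** Bi = mat 1" using B invertible_right_inverse by blast
  define c where "c = Bi *v axis i 1"
  have "B *v c = axis i 1" unfolding c_def using Bi by (simp add: matrix_vector_mul_assoc)
  then have ax: "axis i 1 = (\<Sum>k\<in>UNIV. c$k *\<^sub>R column k B)"
    by (simp add: matrix_mult_sum scalar_mult_eq_scaleR)
  have pe: "pd i h x = (\<Sum>k\<in>UNIV. c$k * frechet_derivative h (at x) (column k B))" for x
  proof -
    have lin: "linear (frechet_derivative h (at x))" using linear_frechet_derivative[OF hd] .
    show ?thesis unfolding pd_def ax by (simp add: linear_sum[OF lin] linear_cmul[OF lin])
  qed
  have gc: "continuous_on UNIV (\<lambda>x. frechet_derivative h (at x) v)" for v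
    unfolding deriv_lin[OF hd] by (intro continuous_intros hc)
  have gi: "(\<lambda>x. frechet_derivative h (at x) v) integrable_on fund_dom B" for v
    using cont_integrable[OF compact_fund_dom] gc continuous_on_subset by blast
  have "integral (fund_dom B) (pd i h) = integral (fund_dom B) (\<lambda>x. \<Sum>k\<in>UNIV. c$k * frechet_derivative h (at x) (column k B))"
    unfolding pe by simp
  also have "\<dots> = (\<Sum>k\<in>UNIV. integral (fund_dom B) (\<lambda>x. c$k * frechet_derivative h (at x) (column k B)))"
    by (rule integral_sum) (auto intro: integrable_on_mult_right gi)
  also have "\<dots> = (\<Sum>k\<in>UNIV. c$k * integral (fund_dom B) (\<lambda>x. frechet_derivative h (at x) (column k B)))"
    by (simp add: integral_mult_right)
  also have "\<dots> = 0" using int_dir_zero[OF B per hd hc] by simp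
  finally show ?thesis .
qed



lemma pd_periodic:
  fixes g :: "real^'n::finite \<Rightarrow> real"
  assumes per: "lattice_periodic B g" and gd: "\<And>x. g differentiable (at x)"
  shows "lattice_periodic B (pd i g)"
  unfolding lattice_periodic_def
proof (intro allI)
  fix x k
  let ?c = "column k B"
  have d: "(g has_derivative frechet_derivative g (at (x + ?c))) (at (x + ?c))"
    using gd frechet_derivative_works by blast
  have "((\<lambda>y. y + ?c) has_derivative (\<lambda>y. y)) (at x)" by (auto intro!: derivative_eq_intros)
  from has_derivative_compose[OF this d]
  have "((\<lambda>y. g (y + ?c)) has_derivative frechet_derivative g (at (x + ?c))) (at x)" by (simp add: o_def)
  moreover have "(\<lambda>y. g (y + ?c)) = g" using per unfolding lattice_periodic_def by auto
  ultimately have "(g has_derivative frechet_derivative g (at (x + ?c))) (at x)" by simp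
  then have "frechet_derivative g (at (x + ?c)) = frechet_derivative g (at x)" by (rule frechet_derivative_at)
  then show "pd i g (x + ?c) = pd i g x" unfolding pd_def by simp
qed

lemma pd_const_mult:
  assumes "g differentiable (at x)"
  shows "pd i (\<lambda>y. c * g y) x = c * pd i g x"
proof -
  have "pd i (\<lambda>y. c) x = 0" using pd_deriv[OF has_derivative_const[of c "at x"], of i] by simp
  then show ?thesis using pd_mult[of "\<lambda>y. c" x g i] assms by simp
qed

context
  fixes f :: "real^'n::finite \<Rightarrow> real" and B :: "real^'n^'n"
  assumes sm: "smooth f" and per: "lattice_periodic B f" and B: "invertible B"
begin

lemma fd: "f differentiable (at x)" using smooth_diff[OF sm] .
lemma pfd: "pd i f differentiable (at x)" using smooth_diff[OF smooth_pd[OF sm]] .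
lemma fc: "continuous_on UNIV f" using smooth_cont[OF sm] .
lemma pfc: "continuous_on UNIV (pd i f)" using smooth_cont[OF smooth_pd[OF sm]] .
lemma ppfc: "continuous_on UNIV (pd k (pd i f))" using smooth_cont[OF smooth_pd[OF smooth_pd[OF sm]]] .
lemma expd: "(\<lambda>y. exp (a * f y)) differentiable (at x)"
  using fd[of x, unfolded differentiable_def] by (auto intro!: derivative_eq_intros simp: differentiable_def)

lemma pd_w: "pd k (\<lambda>y. exp (a * f y) * pd i f y) x
    = a * exp (a * f x) * pd k f x * pd i f x + exp (a * f x) * pd k (pd i f) x"
  using pd_mult[OF expd pfd, of k] pd_exp[OF fd] by simp

lemma int_w: "integral (fund_dom B) (pd i (\<lambda>y. exp (a * f y) * pd i f y)) = 0"
proof (rule int_pd_zero[OF B])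
  show "lattice_periodic B (\<lambda>y. exp (a * f y) * pd i f y)"
    using per pd_periodic[OF per fd, of i] unfolding lattice_periodic_def by simp
  show "(\<lambda>y. exp (a * f y) * pd i f y) differentiable (at x)" for x
    using expd pfd by (rule differentiable_mult)
  show "continuous_on UNIV (pd k (\<lambda>y. exp (a * f y) * pd i f y))" for k
    unfolding pd_w[abs_def] by (intro continuous_intros fc pfc ppfc)
qed

lemma div_id: "(\<Sum>i\<in>UNIV. pd i (\<lambda>y. exp (a * f y) * pd i f y) x) = exp (a * f x) * (a * grad_sq f x + lap f x)"
  unfolding pd_w grad_sq_def lap_def
  by (simp add: sum.distrib sum_distrib_left power2_eq_square algebra_simps)

lemma gsc: "continuous_on UNIV (grad_sq f)"
  unfolding grad_sq_def[abs_def] by (intro continuous_intros pfc)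
lemma lapc: "continuous_on UNIV (lap f)"
  unfolding lap_def[abs_def] by (intro continuous_intros ppfc)

lemma int_div: "integral (fund_dom B) (\<lambda>x. exp (a * f x) * (a * grad_sq f x + lap f x)) = 0"
proof -
  have "integral (fund_dom B) (\<lambda>x. exp (a * f x) * (a * grad_sq f x + lap f x))
      = integral (fund_dom B) (\<lambda>x. \<Sum>i\<in>UNIV. pd i (\<lambda>y. exp (a * f y) * pd i f y) x)"
    unfolding div_id ..
  also have "\<dots> = (\<Sum>i\<in>UNIV. integral (fund_dom B) (pd i (\<lambda>y. exp (a * f y) * pd i f y)))"
  proof (rule integral_sum)
    show "pd i (\<lambda>y. exp (a * f y) * pd i f y) integrable_on fund_dom B" for i
    proof -
      have "continuous_on UNIV (pd i (\<lambda>y. exp (a * f y) * pd i f y))"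
        unfolding pd_w[abs_def] by (intro continuous_intros fc pfc ppfc)
      then show ?thesis using cont_integrable[OF compact_fund_dom] continuous_on_subset by blast
    qed
  qed simp
  also have "\<dots> = 0" using int_w by simp
  finally show ?thesis .
qed

lemma pd_expf: "pd i (\<lambda>y. exp (a * f y)) = (\<lambda>y. a * (exp (a * f y) * pd i f y))"
  using pd_exp[OF fd] by (auto simp: fun_eq_iff)

lemma lap_exp: "lap (\<lambda>y. exp (a * f y)) x = a * (exp (a * f x) * (a * grad_sq f x + lap f x))"
proof -
  have "lap (\<lambda>y. exp (a * f y)) x = (\<Sum>i\<in>UNIV. a * pd i (\<lambda>y. exp (a * f y) * pd i f y) x)"
    unfolding lap_def pd_expf
    using pd_const_mult[OF differentiable_mult[OF expd pfd]] by simp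
  also have "\<dots> = a * (\<Sum>i\<in>UNIV. pd i (\<lambda>y. exp (a * f y) * pd i f y) x)" by (simp add: sum_distrib_left)
  finally show ?thesis unfolding div_id .
qed

lemma grad_exp: "grad_sq (\<lambda>y. exp (a * f y)) x = a\<^sup>2 * exp (2 * a * f x) * grad_sq f x"
proof -
  have e: "exp (2 * a * f x) = exp (a * f x) * exp (a * f x)" by (simp add: exp_add[symmetric])
  show ?thesis
    unfolding grad_sq_def pd_expf e by (simp add: sum_distrib_left power2_eq_square algebra_simps)
qed

end



lemma const_int: "S \<in> lmeasurable \<Longrightarrow> integral S (\<lambda>x. c) = c * measure lebesgue S"
  using lmeasure_integral[of S] integral_mult_right[of S c "\<lambda>x. 1::real"] by simp

lemma holder_exp:
  fixes P :: "(real^'n::finite) set" and f :: "real^'n \<Rightarrow> real"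
  assumes cP: "compact P" and fc: "continuous_on UNIV f" and W: "measure lebesgue P > 0"
    and I: "integral P (\<lambda>x. exp (N * f x)) \<le> V" and N: "N > 0" and q: "0 < q" "q < N"
  shows "integral P (\<lambda>x. exp (q * f x)) \<le> V powr (q / N) * measure lebesgue P powr ((N - q) / N)"
proof -
  define W where "W = measure lebesgue P"
  define I0 where "I0 = integral P (\<lambda>x. exp (N * f x))"
  have mP: "P \<in> lmeasurable" using cP by (rule lmeasurable_compact)
  have "P \<noteq> {}" using W by auto
  then obtain x0 where x0: "x0 \<in> P" "\<And>y. y \<in> P \<Longrightarrow> f x0 \<le> f y"
    using continuous_attains_inf[OF cP _ continuous_on_subset[OF fc]] by blast
  have intg: "continuous_on UNIV g \<Longrightarrow> g integrable_on P" for g :: "real^'n \<Rightarrow> real"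
    using cont_integrable[OF cP] continuous_on_subset by blast
  have ie: "(\<lambda>x. exp (c * f x)) integrable_on P" for c by (intro intg continuous_intros fc)
  have "integral P (\<lambda>x. exp (N * f x0)) \<le> I0" unfolding I0_def
    by (rule integral_le) (use x0 N in \<open>auto intro: ie intg simp: const_int[OF mP]\<close>)
  then have I0p: "I0 > 0" using W by (simp add: const_int[OF mP]) (smt (verit) exp_gt_zero mult_pos_pos)
  define \<theta> where "\<theta> = q / N"
  define \<beta> where "\<beta> = 1 - \<theta>"
  have th: "0 < \<theta>" "\<theta> < 1" using q N unfolding \<theta>_def by auto
  have pw: "exp (q * f x) * (I0 powr (-\<theta>) * W powr (-\<beta>)) \<le> \<theta> * (exp (N * f x) / I0) + \<beta> * (1 / W)" for x
  proof -
    have "(exp (N * f x) / I0) powr \<theta> * (1 / W) powr \<beta> \<le> \<theta> * (exp (N * f x) / I0) + \<beta> * (1 / W)"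
      by (rule Youngs_inequality_0) (use th I0p W in \<open>auto simp: \<beta>_def W_def\<close>)
    moreover have "(exp (N * f x) / I0) powr \<theta> = exp (q * f x) * I0 powr (-\<theta>)"
    proof -
      have ln: "ln (exp (N * f x) / I0) = N * f x - ln I0" using I0p by (simp add: ln_div)
      have "\<theta> * (N * f x - ln I0) = q * f x + (- \<theta>) * ln I0" using N unfolding \<theta>_def by (simp add: field_simps)
      then show ?thesis using I0p by (simp add: powr_def ln exp_add exp_diff exp_minus field_simps)
    qed
    moreover have "(1 / W) powr \<beta> = W powr (-\<beta>)"
      using W by (simp add: powr_minus_divide powr_divide W_def)
    ultimately show ?thesis by (simp add: mult.assoc)
  qed
  have "integral P (\<lambda>x. exp (q * f x) * (I0 powr (-\<theta>) * W powr (-\<beta>)))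
      \<le> integral P (\<lambda>x. \<theta> * (exp (N * f x) / I0) + \<beta> * (1 / W))"
  proof (rule integral_le)
    show "(\<lambda>x. exp (q * f x) * (I0 powr (-\<theta>) * W powr (-\<beta>))) integrable_on P"
      by (intro intg continuous_intros fc)
    have "continuous_on UNIV (\<lambda>x. \<theta> * (exp (N * f x) / I0) + \<beta> * (1 / W))"
      using I0p by (intro continuous_intros fc) auto
    then show "(\<lambda>x. \<theta> * (exp (N * f x) / I0) + \<beta> * (1 / W)) integrable_on P" by (rule intg)
  qed (rule pw)
  also have "\<dots> = \<theta> * (I0 / I0) + \<beta> * (W / W)"
  proof -
    have "integral P (\<lambda>x. \<theta> * (exp (N * f x) / I0) + \<beta> * (1 / W))
        = integral P (\<lambda>x. \<theta> * (exp (N * f x) / I0)) + integral P (\<lambda>x. \<beta> * (1 / W))"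
    proof (rule integral_add)
      have "continuous_on UNIV (\<lambda>x. \<theta> * (exp (N * f x) / I0))"
        using I0p by (intro continuous_intros fc) auto
      then show "(\<lambda>x. \<theta> * (exp (N * f x) / I0)) integrable_on P" by (rule intg)
      show "(\<lambda>x. \<beta> * (1 / W)) integrable_on P" by (intro intg continuous_intros)
    qed
    also have "\<dots> = \<theta> * (I0 / I0) + \<beta> * (W / W)"
      by (simp add: integral_mult_right integral_divide const_int[OF mP] I0_def W_def)
    finally show ?thesis .
  qed
  also have "\<dots> = 1" using I0p W unfolding \<beta>_def W_def by simp
  finally have "integral P (\<lambda>x. exp (q * f x)) * (I0 powr (-\<theta>) * W powr (-\<beta>)) \<le> 1"
    by (simp add: integral_mult_left)
  moreover have "I0 powr (-\<theta>) * W powr (-\<beta>) > 0" using I0p W by (simp add: W_def)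
  ultimately have "integral P (\<lambda>x. exp (q * f x)) \<le> 1 / (I0 powr (-\<theta>) * W powr (-\<beta>))"
    by (simp add: field_simps)
  also have "\<dots> = I0 powr \<theta> * W powr \<beta>" by (simp add: powr_minus field_simps)
  also have "\<dots> \<le> V powr \<theta> * W powr \<beta>"
    using I I0p th by (intro mult_right_mono powr_mono2) (auto simp: I0_def)
  finally show ?thesis unfolding \<theta>_def \<beta>_def W_def using N by (simp add: diff_divide_distrib)
qed



theorem mainTheorem4:
  fixes B :: "real^'n^'n" and f :: "real^'n \<Rightarrow> real" and j :: nat and V0 :: real
  assumes dim: "CARD('n) \<ge> 3"
    and B: "invertible B"
    and per: "lattice_periodic B f"
    and sm: "smooth f"
    and j: "j \<ge> 1"
    and scal: "\<forall>x. scal_conf f x \<ge> - 1 / real j"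
    and vol: "integral (fund_dom B) (\<lambda>x. exp (real CARD('n) * f x)) \<le> V0"
  shows "(\<forall>\<alpha>::real. \<alpha> \<noteq> 0 \<longrightarrow> (\<forall>x.
            2 / \<alpha> * lap (\<lambda>y. exp (\<alpha> * f y)) x
            + (real CARD('n) - 2 - 2 * \<alpha>) * grad_sq f x * exp (\<alpha> * f x)
            \<le> exp ((2 + \<alpha>) * f x) / ((real CARD('n) - 1) * real j)))
    \<and> integral (fund_dom B) (grad_sq f)
        \<le> V0 powr (2 / real CARD('n)) * measure lebesgue (fund_dom B) powr ((real CARD('n) - 2) / real CARD('n))
           / ((real CARD('n) - 1) * real j)
    \<and> integral (fund_dom B) (grad_sq (\<lambda>y. exp (- f y)))
        \<le> measure lebesgue (fund_dom B) / (real j * (real CARD('n) - 1) * (real CARD('n) + 2))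
    \<and> (\<forall>\<alpha>::real. 0 < \<alpha> \<and> \<alpha> < (real CARD('n) - 2) / 2 \<longrightarrow>
         integral (fund_dom B) (grad_sq (\<lambda>y. exp (\<alpha> / 2 * f y)))
         \<le> \<alpha>\<^sup>2 * V0 powr ((2 + \<alpha>) / real CARD('n))
            * measure lebesgue (fund_dom B) powr ((real CARD('n) - 2 - \<alpha>) / real CARD('n))
            / (4 * (real CARD('n) - 2 - 2 * \<alpha>) * (real CARD('n) - 1) * real j))"
proof -
  define n where "n = real CARD('n)"
  define P where "P = fund_dom B"
  define W where "W = measure lebesgue P"
  have n3: "n \<ge> 3" using dim unfolding n_def by simp
  have jp: "real j \<ge> 1" using j by simp
  have cP: "compact P" unfolding P_def by (rule compact_fund_dom)
  have mP: "P \<in> lmeasurable" using cP by (rule lmeasurable_compact)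
  have fc: "continuous_on UNIV f" using fc[OF sm per B] .
  have gsc: "continuous_on UNIV (grad_sq f)" using gsc[OF sm per B] .
  have intg: "continuous_on UNIV g \<Longrightarrow> g integrable_on P" for g :: "real^'n \<Rightarrow> real"
    using cont_integrable[OF cP] continuous_on_subset by blast
  have PW: "2 * lap f x + (n - 2) * grad_sq f x \<le> exp (2 * f x) / ((n - 1) * real j)" for x
  proof -
    have s: "- 1 / real j \<le> exp (-2 * f x) * (0 - 2 * (n - 1) * lap f x - (n - 2) * (n - 1) * grad_sq f x)"
      using scal unfolding scal_conf_def n_def by auto
    have e: "exp (2 * f x) * exp (-2 * f x) = 1" by (simp add: exp_add[symmetric])
    have ep: "exp (2 * f x) > 0" by simp
    from mult_left_mono[OF s less_imp_le[OF ep]]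
    have "exp (2 * f x) * (- 1 / real j) \<le> (exp (2 * f x) * exp (-2 * f x)) * (0 - 2 * (n - 1) * lap f x - (n - 2) * (n - 1) * grad_sq f x)"
      by (simp add: mult.assoc)
    then have "(n - 1) * (2 * lap f x + (n - 2) * grad_sq f x) \<le> exp (2 * f x) / real j"
      unfolding e by (simp add: algebra_simps)
    then show ?thesis using n3 jp by (simp add: field_simps mult.commute)
  qed
  have part1: "\<forall>\<alpha>::real. \<alpha> \<noteq> 0 \<longrightarrow> (\<forall>x.
            2 / \<alpha> * lap (\<lambda>y. exp (\<alpha> * f y)) x
            + (n - 2 - 2 * \<alpha>) * grad_sq f x * exp (\<alpha> * f x)
            \<le> exp ((2 + \<alpha>) * f x) / ((n - 1) * real j))"
  proof (intro allI impI)
    fix \<alpha> :: real and x assume a: "\<alpha> \<noteq> 0"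
    have "2 / \<alpha> * lap (\<lambda>y. exp (\<alpha> * f y)) x + (n - 2 - 2 * \<alpha>) * grad_sq f x * exp (\<alpha> * f x)
        = exp (\<alpha> * f x) * (2 * lap f x + (n - 2) * grad_sq f x)"
      unfolding lap_exp[OF sm per B] using a by (simp add: field_simps)
    also have "\<dots> \<le> exp (\<alpha> * f x) * (exp (2 * f x) / ((n - 1) * real j))"
      by (rule mult_left_mono[OF PW]) simp
    also have "\<dots> = exp ((2 + \<alpha>) * f x) / ((n - 1) * real j)"
      by (simp add: exp_add[symmetric] algebra_simps)
    finally show "2 / \<alpha> * lap (\<lambda>y. exp (\<alpha> * f y)) x + (n - 2 - 2 * \<alpha>) * grad_sq f x * exp (\<alpha> * f x)
            \<le> exp ((2 + \<alpha>) * f x) / ((n - 1) * real j)" .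
  qed
  have INT: "(n - 2 - 2 * a) * integral P (\<lambda>x. grad_sq f x * exp (a * f x))
      \<le> integral P (\<lambda>x. exp ((2 + a) * f x)) / ((n - 1) * real j)" for a
  proof -
    have ic1: "(\<lambda>x. exp (a * f x) * (a * grad_sq f x + lap f x)) integrable_on P"
      by (intro intg continuous_intros fc gsc lapc[OF sm per B])
    have ic2: "(\<lambda>x. grad_sq f x * exp (a * f x)) integrable_on P"
      by (intro intg continuous_intros fc gsc)
    have ic3: "(\<lambda>x. exp ((2 + a) * f x) / ((n - 1) * real j)) integrable_on P"
      using n3 jp by (intro intg continuous_intros fc) auto
    have eqf: "(\<lambda>x. 2 * (exp (a * f x) * (a * grad_sq f x + lap f x)) + (n - 2 - 2 * a) * (grad_sq f x * exp (a * f x)))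
        = (\<lambda>x. exp (a * f x) * (2 * lap f x + (n - 2) * grad_sq f x))"
      by (auto simp: fun_eq_iff algebra_simps)
    have "integral P (\<lambda>x. 2 * (exp (a * f x) * (a * grad_sq f x + lap f x)) + (n - 2 - 2 * a) * (grad_sq f x * exp (a * f x)))
        = 2 * integral P (\<lambda>x. exp (a * f x) * (a * grad_sq f x + lap f x)) + (n - 2 - 2 * a) * integral P (\<lambda>x. grad_sq f x * exp (a * f x))"
      using integral_add[OF integrable_on_mult_right[OF ic1] integrable_on_mult_right[OF ic2]]
      by (simp add: integral_mult_right)
    also have "integral P (\<lambda>x. exp (a * f x) * (a * grad_sq f x + lap f x)) = 0"
      unfolding P_def by (rule int_div[OF sm per B])
    finally have L: "integral P (\<lambda>x. exp (a * f x) * (2 * lap f x + (n - 2) * grad_sq f x))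
        = (n - 2 - 2 * a) * integral P (\<lambda>x. grad_sq f x * exp (a * f x))" unfolding eqf by simp
    have "integral P (\<lambda>x. exp (a * f x) * (2 * lap f x + (n - 2) * grad_sq f x))
        \<le> integral P (\<lambda>x. exp ((2 + a) * f x) / ((n - 1) * real j))"
    proof (rule integral_le)
      show "(\<lambda>x. exp (a * f x) * (2 * lap f x + (n - 2) * grad_sq f x)) integrable_on P"
        by (intro intg continuous_intros fc gsc lapc[OF sm per B])
      show "(\<lambda>x. exp ((2 + a) * f x) / ((n - 1) * real j)) integrable_on P" by (rule ic3)
      fix x
      have "exp (a * f x) * (2 * lap f x + (n - 2) * grad_sq f x) \<le> exp (a * f x) * (exp (2 * f x) / ((n - 1) * real j))"
        by (rule mult_left_mono[OF PW]) simp
      also have "\<dots> = exp ((2 + a) * f x) / ((n - 1) * real j)"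
        by (simp add: exp_add[symmetric] algebra_simps)
      finally show "exp (a * f x) * (2 * lap f x + (n - 2) * grad_sq f x) \<le> exp ((2 + a) * f x) / ((n - 1) * real j)" .
    qed
    then show ?thesis unfolding L by (simp add: integral_divide)
  qed
  have W0: "W \<ge> 0" unfolding W_def by simp
  have rest: "integral P (grad_sq f)
        \<le> V0 powr (2 / n) * W powr ((n - 2) / n) / ((n - 1) * real j)
    \<and> integral P (grad_sq (\<lambda>y. exp (- f y))) \<le> W / (real j * (n - 1) * (n + 2))
    \<and> (\<forall>\<alpha>::real. 0 < \<alpha> \<and> \<alpha> < (n - 2) / 2 \<longrightarrow>
         integral P (grad_sq (\<lambda>y. exp (\<alpha> / 2 * f y)))
         \<le> \<alpha>\<^sup>2 * V0 powr ((2 + \<alpha>) / n) * W powr ((n - 2 - \<alpha>) / n)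
            / (4 * (n - 2 - 2 * \<alpha>) * (n - 1) * real j))"
  proof (cases "W = 0")
    case True
    then have "negligible P" using negligible_iff_measure0[OF mP] unfolding W_def by simp
    then have "integral P g = 0" for g :: "real^'n \<Rightarrow> real" by (rule integral_negligible)
    then show ?thesis using True n3 by simp
  next
    case False
    then have Wp: "W > 0" using W0 by simp
    have HOL: "integral P (\<lambda>x. exp (q * f x)) \<le> V0 powr (q / n) * W powr ((n - q) / n)" if "0 < q" "q < n" for q
      using holder_exp[OF cP fc, of n V0 q] Wp vol that n3 unfolding W_def P_def n_def by auto
    have gnn: "integral P (\<lambda>x. grad_sq f x * exp (a * f x)) \<ge> 0" for a
    proof (rule integral_nonneg)
      show "(\<lambda>x. grad_sq f x * exp (a * f x)) integrable_on P" by (intro intg continuous_intros fc gsc)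
    qed (simp add: grad_sq_def sum_nonneg)
    have b2: "integral P (grad_sq f) \<le> V0 powr (2 / n) * W powr ((n - 2) / n) / ((n - 1) * real j)"
    proof -
      have "integral P (grad_sq f) \<le> (n - 2 - 2 * 0) * integral P (\<lambda>x. grad_sq f x * exp (0 * f x))"
        using gnn[of 0] n3 by (simp add: mult_le_cancel_right1 del: mult_zero_left)
      also have "\<dots> \<le> integral P (\<lambda>x. exp ((2 + 0) * f x)) / ((n - 1) * real j)" by (rule INT)
      also have "\<dots> \<le> V0 powr (2 / n) * W powr ((n - 2) / n) / ((n - 1) * real j)"
        using HOL[of 2] n3 jp by (intro divide_right_mono) auto
      finally show ?thesis .
    qed
    have b3: "integral P (grad_sq (\<lambda>y. exp (- f y))) \<le> W / (real j * (n - 1) * (n + 2))"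
    proof -
      have ge: "grad_sq (\<lambda>y. exp (- f y)) = (\<lambda>x. grad_sq f x * exp ((-2) * f x))"
        using grad_exp[OF sm per B, of "-1"] by (auto simp: fun_eq_iff)
      have "(n - 2 - 2 * (-2)) * integral P (\<lambda>x. grad_sq f x * exp ((-2) * f x))
          \<le> integral P (\<lambda>x. exp ((2 + (-2)) * f x)) / ((n - 1) * real j)" by (rule INT)
      also have "integral P (\<lambda>x. exp ((2 + (-2)) * f x)) = W"
        using const_int[OF mP, of 1] unfolding W_def by simp
      finally have "(n + 2) * integral P (\<lambda>x. grad_sq f x * exp ((-2) * f x)) \<le> W / ((n - 1) * real j)"
        by (simp add: add.commute)
      then have "(n + 2) * integral P (\<lambda>x. grad_sq f x * exp ((-2) * f x)) * ((n - 1) * real j) \<le> W"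
        using n3 jp by (simp add: pos_le_divide_eq)
      then have "integral P (\<lambda>x. grad_sq f x * exp ((-2) * f x)) * (real j * (n - 1) * (n + 2)) \<le> W"
        by (simp add: algebra_simps)
      then show ?thesis unfolding ge using n3 jp by (simp add: pos_le_divide_eq)
    qed
    have b4: "\<forall>\<alpha>::real. 0 < \<alpha> \<and> \<alpha> < (n - 2) / 2 \<longrightarrow>
         integral P (grad_sq (\<lambda>y. exp (\<alpha> / 2 * f y)))
         \<le> \<alpha>\<^sup>2 * V0 powr ((2 + \<alpha>) / n) * W powr ((n - 2 - \<alpha>) / n)
            / (4 * (n - 2 - 2 * \<alpha>) * (n - 1) * real j)"
    proof (intro allI impI)
      fix \<alpha> :: real assume a: "0 < \<alpha> \<and> \<alpha> < (n - 2) / 2"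
      have ge: "grad_sq (\<lambda>y. exp (\<alpha> / 2 * f y)) = (\<lambda>x. \<alpha>\<^sup>2 / 4 * (grad_sq f x * exp (\<alpha> * f x)))"
        using grad_exp[OF sm per B, of "\<alpha> / 2"] by (auto simp: fun_eq_iff power2_eq_square)
      have pos: "n - 2 - 2 * \<alpha> > 0" using a by simp
      have "(n - 2 - 2 * \<alpha>) * integral P (\<lambda>x. grad_sq f x * exp (\<alpha> * f x))
          \<le> integral P (\<lambda>x. exp ((2 + \<alpha>) * f x)) / ((n - 1) * real j)" by (rule INT)
      also have "\<dots> \<le> V0 powr ((2 + \<alpha>) / n) * W powr ((n - (2 + \<alpha>)) / n) / ((n - 1) * real j)"
        using HOL[of "2 + \<alpha>"] n3 jp a by (intro divide_right_mono) auto
      also have "n - (2 + \<alpha>) = n - 2 - \<alpha>" by simp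
      finally have "integral P (\<lambda>x. grad_sq f x * exp (\<alpha> * f x)) * (n - 2 - 2 * \<alpha>)
          \<le> V0 powr ((2 + \<alpha>) / n) * W powr ((n - 2 - \<alpha>) / n) / ((n - 1) * real j)"
        by (simp add: mult.commute)
      then have "integral P (\<lambda>x. grad_sq f x * exp (\<alpha> * f x))
          \<le> V0 powr ((2 + \<alpha>) / n) * W powr ((n - 2 - \<alpha>) / n) / ((n - 1) * real j) / (n - 2 - 2 * \<alpha>)"
        by (subst pos_le_divide_eq[OF pos])
      then have h1: "\<alpha>\<^sup>2 / 4 * integral P (\<lambda>x. grad_sq f x * exp (\<alpha> * f x))
          \<le> \<alpha>\<^sup>2 / 4 * (V0 powr ((2 + \<alpha>) / n) * W powr ((n - 2 - \<alpha>) / n) / ((n - 1) * real j) / (n - 2 - 2 * \<alpha>))"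
        by (rule mult_left_mono) simp
      have h2: "integral P (grad_sq (\<lambda>y. exp (\<alpha> / 2 * f y))) = \<alpha>\<^sup>2 / 4 * integral P (\<lambda>x. grad_sq f x * exp (\<alpha> * f x))"
        unfolding ge by (rule integral_mult_right)
      have h3: "\<alpha>\<^sup>2 / 4 * (V0 powr ((2 + \<alpha>) / n) * W powr ((n - 2 - \<alpha>) / n) / ((n - 1) * real j) / (n - 2 - 2 * \<alpha>))
          = \<alpha>\<^sup>2 * V0 powr ((2 + \<alpha>) / n) * W powr ((n - 2 - \<alpha>) / n) / (4 * (n - 2 - 2 * \<alpha>) * (n - 1) * real j)"
        using pos n3 jp by (simp add: field_simps)
      show "integral P (grad_sq (\<lambda>y. exp (\<alpha> / 2 * f y)))
         \<le> \<alpha>\<^sup>2 * V0 powr ((2 + \<alpha>) / n) * W powr ((n - 2 - \<alpha>) / n)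
            / (4 * (n - 2 - 2 * \<alpha>) * (n - 1) * real j)" unfolding h2 h3[symmetric] by (rule h1)
    qed
    show ?thesis using b2 b3 b4 by blast
  qed
  show ?thesis using part1 rest unfolding n_def P_def W_def by blast
qed


end
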